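(* Let $F$ be a field, $4\le n<\infty$, and let $\varphi$ be an almost identity PC-map of $\mathrm{UT}(n,F)$. For $u=(u_1,\dots,u_{n-1})\in F^{n-1}$ (a row) put $a_u=\begin{pmatrix}1&u\\0&e_{n-1}\end{pmatrix}=e+\sum_{j=2}^{n}u_{j-1}e_{1j}$. Then there is a function $f:F^{n-1}\to F$ such that $\varphi(a_u)=a_u\,t_{1n}(f(u))$ for all $u$, and $f(u)=0$ whenever $u_1=u_2=0$.
   Context: $\mathrm{UT}(n,F)$ is the group of upper unitriangular $n\times n$ matrices over $F$; $e$ (or $e_m$) is the identity matrix, $e_{ij}$ the matrix unit, $t_{ij}(\alpha)=e+\alpha e_{ij}$ ($i<j$). $[x,y]=xyx^{-1}y^{-1}$. A PC-map is a bijection $\varphi$ of the group with $\varphi([x,y])=[\varphi(x),\varphi(y)]$ for all $x,y$; it is almost identity if $\varphi(t_{ij}(\alpha))=t_{ij}(\alpha)$ for all $i<j$, $\alpha\in F$. *)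

theory Defs
  imports "Jordan_Normal_Form.Matrix"
begin

text \<open>Indices are 0-based: paper's entry (i,j) with 1 \<le> i,j \<le> n is entry (i-1,j-1) here.\<close>

definition UT :: "nat \<Rightarrow> ('a::field) mat set" where
  "UT n = {A \<in> carrier_mat n n. (\<forall>i<n. A $$ (i,i) = 1) \<and> (\<forall>i<n. \<forall>j<i. A $$ (i,j) = 0)}"

definition ut_inv :: "nat \<Rightarrow> ('a::field) mat \<Rightarrow> 'a mat" where
  "ut_inv n A = (THE B. B \<in> carrier_mat n n \<and> A * B = 1\<^sub>m n \<and> B * A = 1\<^sub>m n)"

definition comm :: "nat \<Rightarrow> ('a::field) mat \<Rightarrow> 'a mat \<Rightarrow> 'a mat" where
  "comm n x y = x * y * ut_inv n x * ut_inv n y"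

definition tr :: "nat \<Rightarrow> nat \<Rightarrow> nat \<Rightarrow> ('a::field) \<Rightarrow> 'a mat" where
  "tr n i j \<alpha> = mat n n (\<lambda>(k,l). (if k = l then 1 else 0) + (if k = i \<and> l = j then \<alpha> else 0))"

definition PC_map :: "nat \<Rightarrow> (('a::field) mat \<Rightarrow> 'a mat) \<Rightarrow> bool" where
  "PC_map n \<phi> \<longleftrightarrow> bij_betw \<phi> (UT n) (UT n) \<and>
     (\<forall>x\<in>UT n. \<forall>y\<in>UT n. \<phi> (comm n x y) = comm n (\<phi> x) (\<phi> y))"

definition almost_identity :: "nat \<Rightarrow> (('a::field) mat \<Rightarrow> 'a mat) \<Rightarrow> bool" where
  "almost_identity n \<phi> \<longleftrightarrow> (\<forall>i j \<alpha>. i < j \<and> j < n \<longrightarrow> \<phi> (tr n i j \<alpha>) = tr n i j \<alpha>)"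

text \<open>a_u = e + sum_{j=2}^n u_{j-1} e_{1j}; u is a vector of length n-1 with u$k = u_{k+1}.\<close>
definition a_mat :: "nat \<Rightarrow> ('a::field) vec \<Rightarrow> 'a mat" where
  "a_mat n u = mat n n (\<lambda>(k,l). if k = l then 1 else if k = 0 \<and> 1 \<le> l then u $ (l - 1) else 0)"

end

theory Submission
  imports Defs "Jordan_Normal_Form.Determinant"
begin

lemma tr_carrier[simp]: "tr n i j \<alpha> \<in> carrier_mat n n"
  unfolding tr_def by simp

lemma tr_index[simp]: "k < n \<Longrightarrow> l < n \<Longrightarrow> tr n i j \<alpha> $$ (k,l) =
   (if k = l then 1 else 0) + (if k = i \<and> l = j then \<alpha> else 0)"
  unfolding tr_def by simp

lemma tr_dim[simp]: "dim_row (tr n i j \<alpha>) = n" "dim_col (tr n i j \<alpha>) = n"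
  unfolding tr_def by simp_all

lemma mult_tr_right:
  assumes A: "A \<in> carrier_mat n n" and "i < n" "j < n" "k < n" "l < n"
  shows "(A * tr n i j \<alpha>) $$ (k,l) = A $$ (k,l) + (if l = j then A $$ (k,i) * \<alpha> else 0)"
proof -
  have "(A * tr n i j \<alpha>) $$ (k,l) = (\<Sum>m\<in>{0..<n}. A $$ (k,m) * ((if m = l then 1 else 0) + (if m = i \<and> l = j then \<alpha> else 0)))"
    using assms by (simp add: scalar_prod_def)
  also have "\<dots> = (\<Sum>m\<in>{0..<n}. (if m = l then A $$ (k,m) else 0)) + (\<Sum>m\<in>{0..<n}. (if m = i then (if l = j then A $$ (k,m) * \<alpha> else 0) else 0))"
    by (subst sum.distrib[symmetric], rule sum.cong, auto simp: algebra_simps)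
  also have "\<dots> = A $$ (k,l) + (if l = j then A $$ (k,i) * \<alpha> else 0)"
    using assms by (simp add: sum.delta)
  finally show ?thesis .
qed

lemma mult_tr_left:
  assumes A: "A \<in> carrier_mat n n" and "i < n" "j < n" "k < n" "l < n"
  shows "(tr n i j \<alpha> * A) $$ (k,l) = A $$ (k,l) + (if k = i then \<alpha> * A $$ (j,l) else 0)"
proof -
  have "(tr n i j \<alpha> * A) $$ (k,l) = (\<Sum>m\<in>{0..<n}. ((if k = m then 1 else 0) + (if k = i \<and> m = j then \<alpha> else 0)) * A $$ (m,l))"
    using assms by (simp add: scalar_prod_def)
  also have "\<dots> = (\<Sum>m\<in>{0..<n}. (if m = k then A $$ (m,l) else 0)) + (\<Sum>m\<in>{0..<n}. (if m = j then (if k = i then \<alpha> * A $$ (m,l) else 0) else 0))"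
    by (subst sum.distrib[symmetric], rule sum.cong, auto simp: algebra_simps)
  also have "\<dots> = A $$ (k,l) + (if k = i then \<alpha> * A $$ (j,l) else 0)"
    using assms by (simp add: sum.delta)
  finally show ?thesis .
qed

lemma a_carrier[simp]: "a_mat n u \<in> carrier_mat n n"
  unfolding a_mat_def by simp

lemma a_dim[simp]: "dim_row (a_mat n u) = n" "dim_col (a_mat n u) = n"
  unfolding a_mat_def by simp_all

lemma a_index[simp]: "k < n \<Longrightarrow> l < n \<Longrightarrow> a_mat n u $$ (k,l) =
   (if k = l then 1 else if k = 0 \<and> 1 \<le> l then u $ (l - 1) else 0)"
  unfolding a_mat_def by simp

lemma mult_a_right:
  assumes A: "A \<in> carrier_mat n n" and "k < n" "l < n"
  shows "(A * a_mat n u) $$ (k,l) = A $$ (k,l) + (if 1 \<le> l then A $$ (k,0) * u $ (l - 1) else 0)"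
proof -
  have "(A * a_mat n u) $$ (k,l) = (\<Sum>m\<in>{0..<n}. A $$ (k,m) * (if m = l then 1 else if m = 0 \<and> 1 \<le> l then u $ (l - 1) else 0))"
    using assms by (simp add: scalar_prod_def)
  also have "\<dots> = (\<Sum>m\<in>{0..<n}. (if m = l then A $$ (k,m) else 0)) + (\<Sum>m\<in>{0..<n}. (if m = 0 then (if 1 \<le> l then A $$ (k,m) * u $ (l - 1) else 0) else 0))"
    by (subst sum.distrib[symmetric], rule sum.cong, auto simp: algebra_simps)
  also have "\<dots> = A $$ (k,l) + (if 1 \<le> l then A $$ (k,0) * u $ (l - 1) else 0)"
    using assms by (simp add: sum.delta)
  finally show ?thesis .
qed

lemma mult_a_left:
  assumes A: "A \<in> carrier_mat n n" and "k < n" "l < n"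
  shows "(a_mat n u * A) $$ (k,l) = A $$ (k,l) + (if k = 0 then (\<Sum>m\<in>{1..<n}. u $ (m - 1) * A $$ (m,l)) else 0)"
proof -
  have "(a_mat n u * A) $$ (k,l) = (\<Sum>m\<in>{0..<n}. (if k = m then 1 else if k = 0 \<and> 1 \<le> m then u $ (m - 1) else 0) * A $$ (m,l))"
    using assms by (simp add: scalar_prod_def)
  also have "\<dots> = (\<Sum>m\<in>{0..<n}. (if m = k then A $$ (m,l) else 0)) + (\<Sum>m\<in>{0..<n}. (if k = 0 \<and> 1 \<le> m then u $ (m - 1) * A $$ (m,l) else 0))"
    by (subst sum.distrib[symmetric], rule sum.cong, auto simp: algebra_simps)
  also have "(\<Sum>m\<in>{0..<n}. (if k = 0 \<and> 1 \<le> m then u $ (m - 1) * A $$ (m,l) else 0))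
     = (if k = 0 then (\<Sum>m\<in>{1..<n}. u $ (m - 1) * A $$ (m,l)) else 0)"
  proof (cases "k = 0")
    case True
    have "(\<Sum>m\<in>{0..<n}. (if 1 \<le> m then u $ (m - 1) * A $$ (m,l) else 0)) = (\<Sum>m\<in>{0..<n} \<inter> {m. 1 \<le> m}. u $ (m - 1) * A $$ (m,l))"
      by (subst sum.inter_restrict) auto
    also have "{0..<n} \<inter> {m. 1 \<le> m} = {1..<n}" by auto
    finally show ?thesis using True by simp
  qed simp
  finally show ?thesis using assms by (simp add: sum.delta)
qed

lemma UT_carrier: "A \<in> UT n \<Longrightarrow> A \<in> carrier_mat n n"
  unfolding UT_def by auto

lemma UT_det: assumes "A \<in> UT n" shows "det A = 1"
proof -
  have A: "A \<in> carrier_mat n n" using assms by (rule UT_carrier)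
  have ut: "upper_triangular A" using assms A unfolding UT_def upper_triangular_def by auto
  have "map (\<lambda>i. A $$ (i,i)) [0..<n] = map (\<lambda>i. 1) [0..<n]"
    by (rule map_cong) (use assms in \<open>auto simp: UT_def\<close>)
  then have "diag_mat A = replicate n 1" using A unfolding diag_mat_def by (simp add: map_replicate_const)
  then show ?thesis using det_upper_triangular[OF ut A] by simp
qed

lemma inv_unique:
  fixes A :: "'a::field mat"
  assumes "A \<in> carrier_mat n n" "B1 \<in> carrier_mat n n" "B2 \<in> carrier_mat n n"
    "A * B1 = 1\<^sub>m n" "B2 * A = 1\<^sub>m n"
  shows "B1 = B2"
proof -
  have "B2 = B2 * (A * B1)" using assms right_mult_one_mat[OF assms(3)] by simp
  also have "\<dots> = (B2 * A) * B1" by (rule assoc_mult_mat[OF assms(3,1,2), symmetric])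
  also have "\<dots> = B1" unfolding assms(5) by (rule left_mult_one_mat[OF assms(2)])
  finally show ?thesis by simp
qed

lemma UT_inv:
  assumes "A \<in> UT n"
  shows "ut_inv n A \<in> carrier_mat n n \<and> A * ut_inv n A = 1\<^sub>m n \<and> ut_inv n A * A = 1\<^sub>m n"
proof -
  have A: "A \<in> carrier_mat n n" using assms by (rule UT_carrier)
  have "A \<in> Units (ring_mat TYPE('a) n ())"
    by (rule det_non_zero_imp_unit[OF A]) (simp add: UT_det[OF assms])
  then obtain B where B: "B \<in> carrier_mat n n" "B * A = 1\<^sub>m n" "A * B = 1\<^sub>m n"
    unfolding Units_def ring_mat_def by auto
  have ex: "\<exists>!B. B \<in> carrier_mat n n \<and> A * B = 1\<^sub>m n \<and> B * A = 1\<^sub>m n"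
    using B inv_unique[OF A] by blast
  show ?thesis unfolding ut_inv_def by (rule theI'[OF ex])
qed

lemma comm_eq:
  assumes x: "x \<in> UT n" and y: "y \<in> UT n" and z: "z \<in> carrier_mat n n"
  shows "comm n x y = z \<longleftrightarrow> x * y = z * y * x"
proof -
  have xc: "x \<in> carrier_mat n n" and yc: "y \<in> carrier_mat n n" using x y by (simp_all add: UT_carrier)
  obtain X where X: "X \<in> carrier_mat n n" "x * X = 1\<^sub>m n" "X * x = 1\<^sub>m n" and Xd: "ut_inv n x = X"
    using UT_inv[OF x] by blast
  obtain Y where Y: "Y \<in> carrier_mat n n" "y * Y = 1\<^sub>m n" "Y * y = 1\<^sub>m n" and Yd: "ut_inv n y = Y"
    using UT_inv[OF y] by blast
  have c: "comm n x y = x * y * X * Y" unfolding comm_def Xd Yd ..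
  show ?thesis
  proof
    assume h: "comm n x y = z"
    have "z * y * x = x * y * X * Y * y * x" using h c by simp
    also have "\<dots> = x * y * X * (Y * y) * x" using xc yc X Y by (simp add: assoc_mult_mat[of _ n n _ n _ n])
    also have "\<dots> = x * y * (X * x)" using xc yc X Y by (simp add: assoc_mult_mat[of _ n n _ n _ n])
    also have "\<dots> = x * y" using xc yc X Y by simp
    finally show "x * y = z * y * x" by simp
  next
    assume h: "x * y = z * y * x"
    have "comm n x y = z * y * x * X * Y" using h c by simp
    also have "\<dots> = z * y * (x * X) * Y" using xc yc X Y z by (simp add: assoc_mult_mat[of _ n n _ n _ n])
    also have "\<dots> = z * (y * Y)" using xc yc X Y z by (simp add: assoc_mult_mat[of _ n n _ n _ n])
    also have "\<dots> = z" using z Y by simp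
    finally show "comm n x y = z" .
  qed
qed

lemma one_UT: "1\<^sub>m n \<in> UT n" unfolding UT_def by auto

lemma tr_UT: "i < j \<Longrightarrow> j < n \<Longrightarrow> tr n i j \<alpha> \<in> UT n"
  unfolding UT_def by auto

lemma a_UT: "a_mat n u \<in> UT n"
  unfolding UT_def by auto

lemma a_add:
  assumes "u \<in> carrier_vec (n - 1)" "v \<in> carrier_vec (n - 1)"
  shows "a_mat n u * a_mat n v = a_mat n (u + v)"
proof (rule eq_matI)
  fix k l assume kl: "k < dim_row (a_mat n (u + v))" "l < dim_col (a_mat n (u + v))"
  then have k: "k < n" and l: "l < n" by auto
  show "(a_mat n u * a_mat n v) $$ (k, l) = a_mat n (u + v) $$ (k, l)"
    using k l assms by (auto simp: mult_a_right[OF a_carrier] simp del: index_mult_mat)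
qed auto

lemma a_comm:
  assumes "u \<in> carrier_vec (n - 1)" "v \<in> carrier_vec (n - 1)"
  shows "a_mat n u * a_mat n v = a_mat n v * a_mat n u"
  using assms by (simp add: a_add comm_add_vec)

definition uvec :: "nat \<Rightarrow> nat \<Rightarrow> ('a::field) \<Rightarrow> 'a vec" where
  "uvec n j \<alpha> = vec (n - 1) (\<lambda>k. if k = j - 1 then \<alpha> else 0)"

lemma uvec_carrier[simp]: "uvec n j \<alpha> \<in> carrier_vec (n - 1)"
  unfolding uvec_def by simp

lemma uvec_carrier'[simp]: "uvec n j \<alpha> \<in> carrier_vec (n - Suc 0)"
  unfolding uvec_def by simp

lemma tr_a: assumes "1 \<le> j" "j < n" shows "tr n 0 j \<alpha> = a_mat n (uvec n j \<alpha>)"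
  by (rule eq_matI) (use assms in \<open>auto simp: uvec_def\<close>)

lemma central_tr:
  assumes y: "y \<in> UT n" and n: "1 < n"
  shows "tr n 0 (n - 1) c * y = y * tr n 0 (n - 1) c"
proof (rule eq_matI)
  have yc: "y \<in> carrier_mat n n" using y by (rule UT_carrier)
  fix k l assume kl: "k < dim_row (y * tr n 0 (n - 1) c)" "l < dim_col (y * tr n 0 (n - 1) c)"
  then have k: "k < n" and l: "l < n" using yc by auto
  have d: "\<And>i. i < n \<Longrightarrow> y $$ (i,i) = 1" and lt: "\<And>i j. i < n \<Longrightarrow> j < i \<Longrightarrow> y $$ (i,j) = 0"
    using y unfolding UT_def by auto
  have "y $$ (n - 1, l) = (if l = n - 1 then 1 else 0)" using d lt l n
    by (cases "l = n - 1") auto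
  moreover have "y $$ (k, 0) = (if k = 0 then 1 else 0)" using d lt k n by (cases "k = 0") auto
  ultimately show "(tr n 0 (n - 1) c * y) $$ (k, l) = (y * tr n 0 (n - 1) c) $$ (k, l)"
    using k l n d[of "n - 1"] by (simp add: mult_tr_left[OF yc] mult_tr_right[OF yc] del: index_mult_mat)
qed (use y in \<open>auto simp: UT_def\<close>)

lemma centralizer:
  assumes y: "y \<in> UT n" and c: "\<forall>j. 1 \<le> j \<and> j < n \<longrightarrow> y * tr n 0 j 1 = tr n 0 j 1 * y"
  shows "y = a_mat n (vec (n - 1) (\<lambda>k. y $$ (0, k + 1)))"
proof (rule eq_matI)
  have yc: "y \<in> carrier_mat n n" using y by (rule UT_carrier)
  have d: "\<And>i. i < n \<Longrightarrow> y $$ (i,i) = 1" and lt: "\<And>i j. i < n \<Longrightarrow> j < i \<Longrightarrow> y $$ (i,j) = 0"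
    using y unfolding UT_def by auto
  have rows: "y $$ (k,l) = (if k = l then 1 else 0)" if "1 \<le> k" "k < n" "l < n" for k l
  proof -
    from c that have "(y * tr n 0 k 1) $$ (0,l) = (tr n 0 k 1 * y) $$ (0,l)" by simp
    then have "y $$ (0,l) + (if l = k then y $$ (0,0) * 1 else 0) = y $$ (0,l) + 1 * y $$ (k,l)"
      using that by (simp add: mult_tr_right[OF yc] mult_tr_left[OF yc] del: index_mult_mat)
    then show ?thesis using d[of 0] that by (auto split: if_splits)
  qed
  fix k l assume kl: "k < dim_row (a_mat n (vec (n - 1) (\<lambda>k. y $$ (0, k + 1))))"
    "l < dim_col (a_mat n (vec (n - 1) (\<lambda>k. y $$ (0, k + 1))))"
  then have k: "k < n" and l: "l < n" by auto
  show "y $$ (k, l) = a_mat n (vec (n - 1) (\<lambda>k. y $$ (0, k + 1))) $$ (k, l)"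
  proof (cases "k = 0")
    case True
    then show ?thesis using k l d[of 0] by (cases "l = 0") auto
  next
    case False
    then show ?thesis using k l rows[of k l] by auto
  qed
qed (use y in \<open>auto simp: UT_def\<close>)

lemma D2:
  assumes u: "u \<in> carrier_vec (n - 1)" and j: "1 \<le> j" "j < n - 1"
  shows "a_mat n u * tr n j (n - 1) 1 = tr n 0 (n - 1) (u $ (j - 1)) * (tr n j (n - 1) 1 * a_mat n u)"
proof (rule eq_matI)
  fix k l assume kl: "k < dim_row (tr n 0 (n - 1) (u $ (j - 1)) * (tr n j (n - 1) 1 * a_mat n u))"
    "l < dim_col (tr n 0 (n - 1) (u $ (j - 1)) * (tr n j (n - 1) 1 * a_mat n u))"
  then have k: "k < n" and l: "l < n" by auto
  have c1: "tr n j (n - 1) 1 * a_mat n u \<in> carrier_mat n n" by (rule mult_carrier_mat) auto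
  have L: "(a_mat n u * tr n j (n - 1) 1) $$ (k, l) = a_mat n u $$ (k,l) + (if l = n - 1 then a_mat n u $$ (k,j) else 0)"
    using k l j by (subst mult_tr_right[OF a_carrier]) auto
  have R1: "(tr n j (n - 1) 1 * a_mat n u) $$ (k', l) = a_mat n u $$ (k',l) + (if k' = j then a_mat n u $$ (n - 1,l) else 0)" if "k' < n" for k'
    using that l j by (subst mult_tr_left[OF a_carrier]) auto
  have R: "(tr n 0 (n - 1) (u $ (j - 1)) * (tr n j (n - 1) 1 * a_mat n u)) $$ (k, l) =
     (tr n j (n - 1) 1 * a_mat n u) $$ (k, l) + (if k = 0 then u $ (j - 1) * (tr n j (n - 1) 1 * a_mat n u) $$ (n - 1, l) else 0)"
    using k l j by (subst mult_tr_left[OF c1]) auto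
  show "(a_mat n u * tr n j (n - 1) 1) $$ (k, l) =
    (tr n 0 (n - 1) (u $ (j - 1)) * (tr n j (n - 1) 1 * a_mat n u)) $$ (k, l)"
    proof -
    have nn: "n - 1 < n" using j by auto
    show ?thesis unfolding L R R1[OF k] R1[OF nn] using k l j by auto
  qed
qed auto

lemma phi_UT: fixes \<phi> :: "'a::field mat \<Rightarrow> 'a mat" assumes "PC_map n \<phi>" "x \<in> UT n" shows "\<phi> x \<in> UT n"
proof -
  have "bij_betw \<phi> (UT n) (UT n)" using assms(1) unfolding PC_map_def by simp
  then show ?thesis using bij_betw_apply assms(2) by metis
qed

lemma phi_comm: fixes \<phi> :: "'a::field mat \<Rightarrow> 'a mat" assumes "PC_map n \<phi>" "x \<in> UT n" "y \<in> UT n" shows "\<phi> (comm n x y) = comm n (\<phi> x) (\<phi> y)"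
  using assms unfolding PC_map_def by simp

lemma comm_self: assumes "x \<in> UT n" shows "comm n x x = 1\<^sub>m n"
  using comm_eq[OF assms assms one_carrier_mat] UT_carrier[OF assms]
  by (simp add: left_mult_one_mat)

lemma phi_one: fixes \<phi> :: "'a::field mat \<Rightarrow> 'a mat" assumes "PC_map n \<phi>" shows "\<phi> (1\<^sub>m n) = 1\<^sub>m n"
proof -
  have "\<phi> (1\<^sub>m n) = \<phi> (comm n (1\<^sub>m n) (1\<^sub>m n))" by (rule arg_cong[where f=\<phi>], rule comm_self[OF one_UT, symmetric])
  also have "\<dots> = comm n (\<phi> (1\<^sub>m n)) (\<phi> (1\<^sub>m n))" using phi_comm[OF assms one_UT one_UT] .
  also have "\<dots> = 1\<^sub>m n" using comm_self[OF phi_UT[OF assms one_UT]] .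
  finally show ?thesis .
qed

lemma phi_commute:
  fixes \<phi> :: "'a::field mat \<Rightarrow> 'a mat"
  assumes P: "PC_map n \<phi>" and x: "x \<in> UT n" and y: "y \<in> UT n" and xy: "x * y = y * x"
  shows "\<phi> x * \<phi> y = \<phi> y * \<phi> x"
proof -
  have "comm n x y = 1\<^sub>m n" using comm_eq[OF x y one_carrier_mat] xy UT_carrier[OF y]
    by (simp add: left_mult_one_mat)
  then have "comm n (\<phi> x) (\<phi> y) = 1\<^sub>m n" using phi_comm[OF P x y] phi_one[OF P] by simp
  then show ?thesis using comm_eq[OF phi_UT[OF P x] phi_UT[OF P y] one_carrier_mat]
      UT_carrier[OF phi_UT[OF P y]] by (simp add: left_mult_one_mat)
qed

lemma comm_a_tr:
  assumes u: "u \<in> carrier_vec (n - 1)" and j: "1 \<le> j" "j < n - 1"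
  shows "comm n (a_mat n u) (tr n j (n - 1) 1) = tr n 0 (n - 1) (u $ (j - 1))"
proof -
  have eq: "a_mat n u * tr n j (n - 1) 1 = tr n 0 (n - 1) (u $ (j - 1)) * tr n j (n - 1) 1 * a_mat n u"
    using D2[OF assms] by (simp add: assoc_mult_mat[of _ n n _ n _ n])
  have tU: "tr n j (n - 1) 1 \<in> UT n" using j by (intro tr_UT) auto
  show ?thesis by (subst comm_eq[OF a_UT tU tr_carrier]) (rule eq)
qed

lemma partA:
  assumes n: "3 \<le> n" and P: "PC_map n \<phi>" and AI: "almost_identity n \<phi>"
    and u: "u \<in> carrier_vec (n - 1)"
  shows "\<phi> (a_mat n u) = a_mat n (vec (n - 1) (\<lambda>k. \<phi> (a_mat n u) $$ (0, k + 1)))"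
    and "\<And>k. k < n - 2 \<Longrightarrow> \<phi> (a_mat n u) $$ (0, k + 1) = u $ k"
proof -
  let ?y = "\<phi> (a_mat n u)"
  let ?v = "vec (n - 1) (\<lambda>k. \<phi> (a_mat n u) $$ (0, k + 1))"
  have yU: "?y \<in> UT n" using phi_UT[OF P a_UT] .
  have "\<forall>j. 1 \<le> j \<and> j < n \<longrightarrow> ?y * tr n 0 j 1 = tr n 0 j 1 * ?y"
  proof (intro allI impI)
    fix j assume j: "1 \<le> j \<and> j < n"
    have tj: "tr n 0 j 1 = a_mat n (uvec n j 1)" using j by (intro tr_a) auto
    have "a_mat n u * tr n 0 j 1 = tr n 0 j 1 * a_mat n u"
      unfolding tj by (rule a_comm[OF u uvec_carrier])
    from phi_commute[OF P a_UT tr_UT this] j have "?y * \<phi> (tr n 0 j 1) = \<phi> (tr n 0 j 1) * ?y" by simp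
    moreover have "\<phi> (tr n 0 j 1) = tr n 0 j 1" using AI j unfolding almost_identity_def by auto
    ultimately show "?y * tr n 0 j 1 = tr n 0 j 1 * ?y" by simp
  qed
  from centralizer[OF yU this] show yv: "?y = a_mat n ?v" .
  fix k assume k: "k < n - 2"
  have j: "1 \<le> k + 1" "k + 1 < n - 1" using k by auto
  have "\<phi> (comm n (a_mat n u) (tr n (k+1) (n - 1) 1)) = comm n ?y (\<phi> (tr n (k+1) (n - 1) 1))"
    using phi_comm[OF P a_UT tr_UT] j by simp
  also have "\<phi> (tr n (k+1) (n - 1) 1) = tr n (k+1) (n - 1) 1" using AI j unfolding almost_identity_def by auto
  finally have "\<phi> (tr n 0 (n - 1) (u $ k)) = comm n (a_mat n ?v) (tr n (k+1) (n - 1) 1)"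
    using comm_a_tr[OF u j] yv by simp
  also have "\<dots> = tr n 0 (n - 1) (?v $ k)" using comm_a_tr[OF _ j, of ?v] by simp
  also have "\<phi> (tr n 0 (n - 1) (u $ k)) = tr n 0 (n - 1) (u $ k)"
    using AI n unfolding almost_identity_def by auto
  finally have "tr n 0 (n - 1) (u $ k) $$ (0, n - 1) = tr n 0 (n - 1) (?v $ k) $$ (0, n - 1)" by simp
  then show "?y $$ (0, k + 1) = u $ k" using n k by simp
qed

definition xm :: "nat \<Rightarrow> ('a::field) vec \<Rightarrow> 'a vec \<Rightarrow> 'a mat" where
  "xm n r s = mat n n (\<lambda>(k,l). if k = l then 1 else if k = 1 \<and> 1 \<le> l then r $ (l - 1)
      else if k = 2 \<and> 1 \<le> l then s $ (l - 1) else 0)"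

lemma xm_carrier[simp]: "xm n r s \<in> carrier_mat n n"
  unfolding xm_def by simp

lemma xm_dim[simp]: "dim_row (xm n r s) = n" "dim_col (xm n r s) = n"
  unfolding xm_def by simp_all

lemma xm_index[simp]: "k < n \<Longrightarrow> l < n \<Longrightarrow> xm n r s $$ (k,l) =
  (if k = l then 1 else if k = 1 \<and> 1 \<le> l then r $ (l - 1)
      else if k = 2 \<and> 1 \<le> l then s $ (l - 1) else 0)"
  unfolding xm_def by simp

lemma xm_UT:
  assumes "r $ 0 = 0" "r $ 1 = 0" "s $ 0 = 0" "s $ 1 = 0"
  shows "xm n r s \<in> UT n"
  unfolding UT_def
proof (intro CollectI conjI allI impI xm_carrier)
  fix i j assume "i < n" "j < i"
  then show "xm n r s $$ (i, j) = 0" using assms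
    by (cases "j = 0"; cases "j = 1") auto
qed simp

lemma sum_xm:
  assumes w: "w $ 0 = 0" "w $ 1 = 0" and l: "l < n"
  shows "(\<Sum>m\<in>{1..<n}. w $ (m - 1) * xm n r s $$ (m, l)) = (if 1 \<le> l then w $ (l - 1) else 0)"
proof -
  have "(\<Sum>m\<in>{1..<n}. w $ (m - 1) * xm n r s $$ (m, l)) = (\<Sum>m\<in>{1..<n}. if m = l then w $ (l - 1) else 0)"
  proof (rule sum.cong)
    fix m assume m: "m \<in> {1..<n}"
    show "w $ (m - 1) * xm n r s $$ (m, l) = (if m = l then w $ (l - 1) else 0)"
      using m l w by (cases "m = 1"; cases "m = 2") auto
  qed simp
  also have "\<dots> = (if 1 \<le> l then w $ (l - 1) else 0)" using l by (simp add: sum.delta)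
  finally show ?thesis .
qed

lemma D4:
  assumes n: "3 \<le> n" and zs: "r $ 0 = 0" "r $ 1 = 0" "s $ 0 = 0" "s $ 1 = 0"
    and jw: "(j = 1 \<and> w = r) \<or> (j = 2 \<and> w = s)"
  shows "tr n 0 j 1 * xm n r s = a_mat n w * (xm n r s * tr n 0 j 1)"
proof (rule eq_matI)
  have w: "w $ 0 = 0" "w $ 1 = 0" using jw zs by auto
  have j: "1 \<le> j" "j < n" using jw n by auto
  have c1: "xm n r s * tr n 0 j 1 \<in> carrier_mat n n" by (rule mult_carrier_mat) auto
  fix k l assume kl: "k < dim_row (a_mat n w * (xm n r s * tr n 0 j 1))"
    "l < dim_col (a_mat n w * (xm n r s * tr n 0 j 1))"
  then have k: "k < n" and l: "l < n" by auto
  have N: "(xm n r s * tr n 0 j 1) $$ (m, l) = xm n r s $$ (m,l) + (if l = j then xm n r s $$ (m,0) else 0)"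
    if "m < n" for m
    using that l j by (subst mult_tr_right[OF xm_carrier]) auto
  have S: "(\<Sum>m\<in>{1..<n}. w $ (m - 1) * (xm n r s * tr n 0 j 1) $$ (m, l)) = (if 1 \<le> l then w $ (l - 1) else 0)"
  proof -
    have "(\<Sum>m\<in>{1..<n}. w $ (m - 1) * (xm n r s * tr n 0 j 1) $$ (m, l)) = (\<Sum>m\<in>{1..<n}. w $ (m - 1) * xm n r s $$ (m, l))"
      by (rule sum.cong) (auto simp: N simp del: index_mult_mat)
    then show ?thesis using sum_xm[OF w l] by simp
  qed
  have L: "(tr n 0 j 1 * xm n r s) $$ (k, l) = xm n r s $$ (k,l) + (if k = 0 then xm n r s $$ (j,l) else 0)"
    using k l j by (subst mult_tr_left[OF xm_carrier]) auto
  have R: "(a_mat n w * (xm n r s * tr n 0 j 1)) $$ (k, l) = (xm n r s * tr n 0 j 1) $$ (k, l) +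
      (if k = 0 then (\<Sum>m\<in>{1..<n}. w $ (m - 1) * (xm n r s * tr n 0 j 1) $$ (m, l)) else 0)"
    using k l by (subst mult_a_left[OF c1]) auto
  show "(tr n 0 j 1 * xm n r s) $$ (k, l) = (a_mat n w * (xm n r s * tr n 0 j 1)) $$ (k, l)"
    unfolding L R S N[OF k] using k l j jw zs by (cases "k = 0"; cases "l = 0"; cases "l = j") auto
qed auto

lemma G:
  fixes a :: "'a::field mat"
  assumes c: "a \<in> carrier_mat n n" "b \<in> carrier_mat n n" "y \<in> carrier_mat n n"
    "P \<in> carrier_mat n n" "Q \<in> carrier_mat n n"
    and ha: "a * y = P * y * a" and hb: "b * y = Q * y * b" and aQ: "a * Q = Q * a"
  shows "a * b * y = Q * P * y * (a * b)"
proof -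
  have "a * b * y = a * (b * y)" using c by (simp add: assoc_mult_mat)
  also have "\<dots> = a * (Q * y * b)" by (simp only: hb)
  also have "\<dots> = (a * Q) * y * b" using c by (simp add: assoc_mult_mat[of _ n n _ n _ n])
  also have "\<dots> = (Q * a) * y * b" by (simp only: aQ)
  also have "\<dots> = Q * (a * y) * b" using c by (simp add: assoc_mult_mat[of _ n n _ n _ n])
  also have "\<dots> = Q * (P * y * a) * b" by (simp only: ha)
  also have "\<dots> = Q * P * y * (a * b)" using c by (simp add: assoc_mult_mat[of _ n n _ n _ n])
  finally show ?thesis .
qed

lemma comm_to_eq:
  assumes "x \<in> UT n" "y \<in> UT n" "z \<in> carrier_mat n n" "comm n x y = z"
  shows "x * y = z * y * x"
  using comm_eq[OF assms(1-3)] assms(4) by simp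

lemma add_F:
  fixes \<phi> :: "'a::field mat \<Rightarrow> 'a mat"
  assumes n: "4 \<le> n" and P: "PC_map n \<phi>" and AI: "almost_identity n \<phi>"
    and r: "r \<in> carrier_vec (n - 1)" and s: "s \<in> carrier_vec (n - 1)"
    and zs: "r $ 0 = 0" "r $ 1 = 0" "s $ 0 = 0" "s $ 1 = 0"
  shows "\<phi> (a_mat n (s + r)) $$ (0, n - 1) = \<phi> (a_mat n s) $$ (0, n - 1) + \<phi> (a_mat n r) $$ (0, n - 1)"
proof -
  have n3: "3 \<le> n" using n by simp
  let ?x = "xm n r s"
  let ?y = "\<phi> ?x"
  let ?t1 = "tr n 0 1 (1::'a)"
  let ?t2 = "tr n 0 2 (1::'a)"
  let ?Pr = "\<phi> (a_mat n r)"
  let ?Ps = "\<phi> (a_mat n s)"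
  have xU: "?x \<in> UT n" using xm_UT zs by blast
  have yU: "?y \<in> UT n" using phi_UT[OF P xU] .
  have t1U: "?t1 \<in> UT n" and t2U: "?t2 \<in> UT n" using n by (auto intro: tr_UT)
  have PrU: "?Pr \<in> UT n" and PsU: "?Ps \<in> UT n" using phi_UT[OF P a_UT] by auto
  have PrC: "?Pr \<in> carrier_mat n n" and PsC: "?Ps \<in> carrier_mat n n" and yC: "?y \<in> carrier_mat n n"
    using PrU PsU yU UT_carrier by auto
  have fix1: "\<phi> ?t1 = ?t1" and fix2: "\<phi> ?t2 = ?t2" using AI n unfolding almost_identity_def by auto
  have ex1: "?t1 * ?x = a_mat n r * ?x * ?t1"
    using D4[OF n3 zs, of 1 r] by (simp add: assoc_mult_mat[of _ n n _ n _ n])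
  have ex2: "?t2 * ?x = a_mat n s * ?x * ?t2"
    using D4[OF n3 zs, of 2 s] by (simp add: assoc_mult_mat[of _ n n _ n _ n])
  have c1: "comm n ?t1 ?x = a_mat n r" by (subst comm_eq[OF t1U xU a_carrier]) (rule ex1)
  have c2: "comm n ?t2 ?x = a_mat n s" by (subst comm_eq[OF t2U xU a_carrier]) (rule ex2)
  have "comm n ?t1 ?y = ?Pr" using phi_comm[OF P t1U xU] c1 fix1 by simp
  then have ey1: "?t1 * ?y = ?Pr * ?y * ?t1" using comm_to_eq[OF t1U yU PrC] by simp
  have "comm n ?t2 ?y = ?Ps" using phi_comm[OF P t2U xU] c2 fix2 by simp
  then have ey2: "?t2 * ?y = ?Ps * ?y * ?t2" using comm_to_eq[OF t2U yU PsC] by simp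
  have t1a: "?t1 = a_mat n (uvec n 1 1)" and t2a: "?t2 = a_mat n (uvec n 2 1)" using n by (auto intro: tr_a)
  have Psa: "?Ps = a_mat n (vec (n - 1) (\<lambda>k. ?Ps $$ (0, k + 1)))" using partA(1)[OF n3 P AI s] .
  have Pra: "?Pr = a_mat n (vec (n - 1) (\<lambda>k. ?Pr $$ (0, k + 1)))" using partA(1)[OF n3 P AI r] .
  obtain p where p: "?Ps = a_mat n p" "p \<in> carrier_vec (n - 1)" using Psa by (metis vec_carrier)
  have t1Ps: "?t1 * ?Ps = ?Ps * ?t1" unfolding t1a p(1) by (rule a_comm[OF uvec_carrier p(2)])
  have t1as: "?t1 * a_mat n s = a_mat n s * ?t1" unfolding t1a by (rule a_comm[OF uvec_carrier s])
  have gx: "?t1 * ?t2 * ?x = a_mat n s * a_mat n r * ?x * (?t1 * ?t2)"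
    by (rule G[OF tr_carrier tr_carrier xm_carrier a_carrier a_carrier ex1 ex2 t1as])
  have gy: "?t1 * ?t2 * ?y = ?Ps * ?Pr * ?y * (?t1 * ?t2)"
    by (rule G[OF tr_carrier tr_carrier yC PrC PsC ey1 ey2 t1Ps])
  let ?w = "uvec n 1 1 + uvec n 2 (1::'a)"
  have t12: "?t1 * ?t2 = a_mat n ?w" unfolding t1a t2a by (rule a_add[OF uvec_carrier uvec_carrier])
  have wU: "a_mat n ?w \<in> UT n" by (rule a_UT)
  have cx: "comm n (a_mat n ?w) ?x = a_mat n s * a_mat n r"
    by (subst comm_eq[OF wU xU]) (use gx t12 in auto)
  let ?Pw = "\<phi> (a_mat n ?w)"
  let ?v = "vec (n - 1) (\<lambda>k. ?Pw $$ (0, k + 1))"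
  let ?c = "?v $ (n - 2) - ?w $ (n - 2)"
  have Pwa: "?Pw = a_mat n ?v" using partA(1)[OF n3 P AI] by simp
  have vk: "\<And>k. k < n - 2 \<Longrightarrow> ?v $ k = ?w $ k" using partA(2)[OF n3 P AI, of ?w] by simp
  have "?v = ?w + uvec n (n - 1) ?c"
  proof (rule eq_vecI)
    fix k assume "k < dim_vec (?w + uvec n (n - 1) ?c)"
    then have k: "k < n - 1" by (simp add: uvec_def)
    show "?v $ k = (?w + uvec n (n - 1) ?c) $ k"
    proof (cases "k = n - 2")
      case True then show ?thesis using k by (simp add: uvec_def numeral_2_eq_2)
    next
      case False then have "k < n - 2" using k by simp
      then show ?thesis using vk[of k] k by (simp add: uvec_def numeral_2_eq_2)
    qed
  qed (simp add: uvec_def)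
  then have "?Pw = a_mat n ?w * a_mat n (uvec n (n - 1) ?c)" using Pwa a_add[of ?w n "uvec n (n - 1) ?c"] by simp
  also have "a_mat n (uvec n (n - 1) ?c) = tr n 0 (n - 1) ?c" using n by (intro tr_a[symmetric]) auto
  finally have Pw: "?Pw = ?t1 * ?t2 * tr n 0 (n - 1) ?c" using t12 by simp
  have central: "tr n 0 (n - 1) ?c * ?y = 1\<^sub>m n * ?y * tr n 0 (n - 1) ?c"
    using central_tr[OF yU] n yC by simp
  have one_c: "?t1 * ?t2 * 1\<^sub>m n = 1\<^sub>m n * (?t1 * ?t2)" by simp
  have "?t1 * ?t2 * tr n 0 (n - 1) ?c * ?y = 1\<^sub>m n * (?Ps * ?Pr) * ?y * (?t1 * ?t2 * tr n 0 (n - 1) ?c)"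
    by (rule G[OF _ tr_carrier yC _ one_carrier_mat gy central one_c]) (use PsC PrC in auto)
  then have "?Pw * ?y = ?Ps * ?Pr * ?y * ?Pw" unfolding Pw[symmetric] using PsC PrC by simp
  then have cy: "comm n ?Pw ?y = ?Ps * ?Pr"
    by (subst comm_eq[OF phi_UT[OF P wU] yU]) (use PsC PrC in auto)
  have "\<phi> (a_mat n (s + r)) = ?Ps * ?Pr"
    using phi_comm[OF P wU xU] cx cy a_add[OF s r] by simp
  then have "\<phi> (a_mat n (s + r)) $$ (0, n - 1) = (?Ps * a_mat n (vec (n - 1) (\<lambda>k. ?Pr $$ (0, k + 1)))) $$ (0, n - 1)"
    using Pra by simp
  also have "\<dots> = ?Ps $$ (0, n - 1) + ?Ps $$ (0,0) * ?Pr $$ (0, n - 1)"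
    proof -
    have e: "Suc (n - Suc (Suc 0)) = n - Suc 0" using n by arith
    show ?thesis using n e by (subst mult_a_right[OF PsC]) auto
  qed
  also have "?Ps $$ (0,0) = 1" using PsU n unfolding UT_def by auto
  finally show ?thesis by simp
qed

lemma partB:
  fixes \<phi> :: "'a::field mat \<Rightarrow> 'a mat"
  assumes n: "4 \<le> n" and P: "PC_map n \<phi>" and AI: "almost_identity n \<phi>"
  shows "u \<in> carrier_vec (n - 1) \<Longrightarrow> u $ 0 = 0 \<Longrightarrow> u $ 1 = 0 \<Longrightarrow>
    (\<forall>k. m \<le> k \<and> k < n - 1 \<longrightarrow> u $ k = 0) \<Longrightarrow> \<phi> (a_mat n u) $$ (0, n - 1) = u $ (n - 2)"
proof (induction m arbitrary: u)
  case 0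
  have u0: "u = 0\<^sub>v (n - 1)"
    by (rule eq_vecI) (use 0 in auto)
  have "a_mat n u = 1\<^sub>m n" by (rule eq_matI) (auto simp: u0)
  then have "\<phi> (a_mat n u) = 1\<^sub>m n" using phi_one[OF P] by simp
  then show ?case using n u0 by simp
next
  case (Suc m)
  show ?case
  proof (cases "m < 2 \<or> n - 1 \<le> m")
    case True
    have "\<forall>k. m \<le> k \<and> k < n - 1 \<longrightarrow> u $ k = 0"
    proof (intro allI impI)
      fix k assume k: "m \<le> k \<and> k < n - 1"
      show "u $ k = 0"
      proof (cases "k = m")
        case True
        show ?thesis
        proof (cases "m < 2")
          case True
          then have "m = 0 \<or> m = 1" by auto
          then show ?thesis using \<open>k = m\<close> Suc.prems by auto
        next
          case False
          then show ?thesis using \<open>m < 2 \<or> n - 1 \<le> m\<close> k by auto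
        qed
      next
        case False then show ?thesis using k Suc.prems by auto
      qed
    qed
    then show ?thesis using Suc by blast
  next
    case False
    then have m: "2 \<le> m" "m < n - 1" by auto
    define r where "r = vec (n - 1) (\<lambda>k. if k = m then 0 else u $ k)"
    define s where "s = uvec n (m + 1) (u $ m)"
    have rC: "r \<in> carrier_vec (n - 1)" unfolding r_def by simp
    have sC: "s \<in> carrier_vec (n - 1)" unfolding s_def by simp
    have us: "u = s + r"
      by (rule eq_vecI) (use Suc.prems in \<open>auto simp: r_def s_def uvec_def\<close>)
    have zs: "r $ 0 = 0" "r $ 1 = 0" "s $ 0 = 0" "s $ 1 = 0"
      using m Suc.prems by (auto simp: r_def s_def uvec_def)
    have Fr: "\<phi> (a_mat n r) $$ (0, n - 1) = r $ (n - 2)"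
      by (rule Suc.IH) (use rC zs Suc.prems m in \<open>auto simp: r_def\<close>)
    have sa: "a_mat n s = tr n 0 (m + 1) (u $ m)" unfolding s_def using m by (intro tr_a[symmetric]) auto
    have "\<phi> (tr n 0 (m + 1) (u $ m)) = tr n 0 (m + 1) (u $ m)" using AI m unfolding almost_identity_def by auto
    then have Fs: "\<phi> (a_mat n s) $$ (0, n - 1) = s $ (n - 2)"
      unfolding sa using m n by (auto simp: s_def uvec_def numeral_2_eq_2)
    have "\<phi> (a_mat n u) $$ (0, n - 1) = \<phi> (a_mat n s) $$ (0, n - 1) + \<phi> (a_mat n r) $$ (0, n - 1)"
      unfolding us by (rule add_F[OF n P AI rC sC zs])
    also have "\<dots> = s $ (n - 2) + r $ (n - 2)" using Fr Fs by simp
    also have "\<dots> = u $ (n - 2)" unfolding us using rC sC n by simp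
    finally show ?thesis .
  qed
qed

theorem mainTheorem10:
  fixes \<phi> :: "('a::field) mat \<Rightarrow> 'a mat" and n :: nat
  assumes "4 \<le> n"
    and "PC_map n \<phi>"
    and "almost_identity n \<phi>"
  shows "\<exists>f :: 'a vec \<Rightarrow> 'a. \<forall>u \<in> carrier_vec (n - 1).
           \<phi> (a_mat n u) = a_mat n u * tr n 0 (n - 1) (f u) \<and>
           (u $ 0 = 0 \<and> u $ 1 = 0 \<longrightarrow> f u = 0)"
proof (intro exI ballI conjI impI)
  note n = assms(1) and P = assms(2) and AI = assms(3)
  have n3: "3 \<le> n" using n by simp
  fix u :: "'a vec" assume u: "u \<in> carrier_vec (n - 1)"
  let ?f = "\<lambda>u. \<phi> (a_mat n u) $$ (0, n - 1) - u $ (n - 2)"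
  let ?v = "vec (n - 1) (\<lambda>k. \<phi> (a_mat n u) $$ (0, k + 1))"
  have yv: "\<phi> (a_mat n u) = a_mat n ?v" by (rule partA(1)[OF n3 P AI u])
  obtain v where vdef: "v = ?v" by simp
  have yv': "\<phi> (a_mat n u) = a_mat n v" unfolding vdef by (rule yv)
  have vk: "\<And>k. k < n - 2 \<Longrightarrow> \<phi> (a_mat n u) $$ (0, k + 1) = u $ k" by (rule partA(2)[OF n3 P AI u])
  show "\<phi> (a_mat n u) = a_mat n u * tr n 0 (n - 1) (?f u)"
  proof (rule eq_matI)
    fix k l assume kl: "k < dim_row (a_mat n u * tr n 0 (n - 1) (?f u))" "l < dim_col (a_mat n u * tr n 0 (n - 1) (?f u))"
    then have k: "k < n" and l: "l < n" by auto
    have R: "(a_mat n u * tr n 0 (n - 1) (?f u)) $$ (k, l) = a_mat n u $$ (k,l) + (if l = n - 1 then a_mat n u $$ (k,0) * ?f u else 0)"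
      using k l n by (subst mult_tr_right[OF a_carrier]) auto
    have e: "Suc (n - Suc (Suc 0)) = n - Suc 0" using n by arith
    show "\<phi> (a_mat n u) $$ (k, l) = (a_mat n u * tr n 0 (n - 1) (?f u)) $$ (k, l)"
      unfolding R
    proof (cases "k = 0 \<and> 1 \<le> l")
      case True
      show "\<phi> (a_mat n u) $$ (k, l) = a_mat n u $$ (k,l) + (if l = n - 1 then a_mat n u $$ (k,0) * ?f u else 0)"
      proof (cases "l = n - 1")
        case True
        then show ?thesis using \<open>k = 0 \<and> 1 \<le> l\<close> k l n e by (simp add: numeral_2_eq_2)
      next
        case False
        then have "l - 1 < n - 2" using l True by auto
        from vk[OF this] show ?thesis using True False k l by simp
      qed
    next
      case False
      then show "\<phi> (a_mat n u) $$ (k, l) = a_mat n u $$ (k,l) + (if l = n - 1 then a_mat n u $$ (k,0) * ?f u else 0)"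
        using k l n by (auto simp: yv')
    qed
  qed (simp_all add: yv')
  assume z: "u $ 0 = 0 \<and> u $ 1 = 0"
  have "\<phi> (a_mat n u) $$ (0, n - 1) = u $ (n - 2)"
    by (rule partB[OF n P AI u, of "n - 1"]) (use z in auto)
  then show "?f u = 0" by simp
qed

end
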